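(* Let $n\ge3$ and $H=\sum_{1\le i\ne j\le n}[X_{ij}(R),X_{ji}(R)]\subseteq\mathfrak{stl}_n(R)$. Every $x\in H$ can be written as $$x=\sum_i t(a_i,b_i)+\sum_{2\le j\le n}T_{1j}(c_j,1)$$ for finitely many $a_i,b_i\in R$ and some $c_j\in R$.
   Context: $K$ is a unital commutative ring, $R$ a unital associative $K$-algebra, free as a $K$-module with a basis containing $1$. Leibniz algebra: $K$-bilinear bracket with $[x,[y,z]]=[[x,y],z]-[[x,z],y]$. For $n\ge3$, $\mathfrak{stl}_n(R)$ is the Leibniz algebra over $K$ generated by $X_{ij}(a)$, $a\in R$, $1\le i\ne j\le n$, subject to: $X_{ij}$ is $K$-linear in $a$; $[X_{ij}(a),X_{jk}(b)]=X_{ik}(ab)$ and $[X_{ij}(a),X_{ki}(b)]=-X_{kj}(ba)$ for distinct $i,j,k$; $[X_{ij}(a),X_{kl}(b)]=0$ for $j\ne k$, $i\ne l$. Notation: $T_{ij}(a,b)=[X_{ij}(a),X_{ji}(b)]$, and $t(a,b)=T_{1j}(a,b)-T_{1j}(ba,1)$ for any $2\le j\le n$ (this is independent of $j$). *)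

theory Defs
  imports Main
begin

definition is_K_module :: "('k::comm_ring_1 \<Rightarrow> 'm::ab_group_add \<Rightarrow> 'm) \<Rightarrow> bool" where
  "is_K_module s \<longleftrightarrow>
     (\<forall>a x y. s a (x + y) = s a x + s a y) \<and>
     (\<forall>a b x. s (a + b) x = s a x + s b x) \<and>
     (\<forall>a b x. s (a * b) x = s a (s b x)) \<and>
     (\<forall>x. s 1 x = x)"

definition is_K_algebra :: "('k::comm_ring_1 \<Rightarrow> 'r::ring_1 \<Rightarrow> 'r) \<Rightarrow> bool" where
  "is_K_algebra s \<longleftrightarrow> is_K_module s \<and>
     (\<forall>k x y. s k (x * y) = s k x * y \<and> s k (x * y) = x * s k y)"

definition is_K_basis :: "('k::comm_ring_1 \<Rightarrow> 'm::ab_group_add \<Rightarrow> 'm) \<Rightarrow> 'm set \<Rightarrow> bool" where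
  "is_K_basis s B \<longleftrightarrow>
     (\<forall>x. \<exists>!c::'m \<Rightarrow> 'k. finite {b. c b \<noteq> 0} \<and> {b. c b \<noteq> 0} \<subseteq> B \<and>
            x = (\<Sum>b\<in>{b. c b \<noteq> 0}. s (c b) b))"

definition is_leibniz :: "('k::comm_ring_1 \<Rightarrow> 'l::ab_group_add \<Rightarrow> 'l) \<Rightarrow> ('l \<Rightarrow> 'l \<Rightarrow> 'l) \<Rightarrow> bool" where
  "is_leibniz s br \<longleftrightarrow> is_K_module s \<and>
     (\<forall>x y z. br (x + y) z = br x z + br y z) \<and>
     (\<forall>x y z. br x (y + z) = br x y + br x z) \<and>
     (\<forall>k x y. br (s k x) y = s k (br x y) \<and> br x (s k y) = s k (br x y)) \<and>
     (\<forall>x y z. br x (br y z) = br (br x y) z - br (br x z) y)"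

definition stl_rels :: "nat \<Rightarrow> ('k::comm_ring_1 \<Rightarrow> 'r::ring_1 \<Rightarrow> 'r) \<Rightarrow>
    ('k \<Rightarrow> 'l::ab_group_add \<Rightarrow> 'l) \<Rightarrow> ('l \<Rightarrow> 'l \<Rightarrow> 'l) \<Rightarrow> (nat \<Rightarrow> nat \<Rightarrow> 'r \<Rightarrow> 'l) \<Rightarrow> bool" where
  "stl_rels n sR sL br X \<longleftrightarrow>
     (\<forall>i\<in>{1..n}. \<forall>j\<in>{1..n}. i \<noteq> j \<longrightarrow>
        (\<forall>a b. X i j (a + b) = X i j a + X i j b) \<and>
        (\<forall>k a. X i j (sR k a) = sL k (X i j a))) \<and>
     (\<forall>i\<in>{1..n}. \<forall>j\<in>{1..n}. \<forall>k\<in>{1..n}. i \<noteq> j \<and> j \<noteq> k \<and> i \<noteq> k \<longrightarrow>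
        (\<forall>a b. br (X i j a) (X j k b) = X i k (a * b)) \<and>
        (\<forall>a b. br (X i j a) (X k i b) = - X k j (b * a))) \<and>
     (\<forall>i\<in>{1..n}. \<forall>j\<in>{1..n}. \<forall>k\<in>{1..n}. \<forall>l\<in>{1..n}.
        i \<noteq> j \<and> k \<noteq> l \<and> j \<noteq> k \<and> i \<noteq> l \<longrightarrow>
        (\<forall>a b. br (X i j a) (X k l b) = 0))"

definition stT :: "('l \<Rightarrow> 'l \<Rightarrow> 'l) \<Rightarrow> (nat \<Rightarrow> nat \<Rightarrow> 'r \<Rightarrow> 'l) \<Rightarrow> nat \<Rightarrow> nat \<Rightarrow> 'r \<Rightarrow> 'r \<Rightarrow> 'l" where
  "stT br X i j a b = br (X i j a) (X j i b)"

definition stt :: "('l::ab_group_add \<Rightarrow> 'l \<Rightarrow> 'l) \<Rightarrow> (nat \<Rightarrow> nat \<Rightarrow> 'r::ring_1 \<Rightarrow> 'l) \<Rightarrow> 'r \<Rightarrow> 'r \<Rightarrow> 'l" where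
  "stt br X a b = stT br X 1 2 a b - stT br X 1 2 (b * a) 1"

inductive_set stlH :: "nat \<Rightarrow> ('k::comm_ring_1 \<Rightarrow> 'l::ab_group_add \<Rightarrow> 'l) \<Rightarrow> ('l \<Rightarrow> 'l \<Rightarrow> 'l)
    \<Rightarrow> (nat \<Rightarrow> nat \<Rightarrow> 'r \<Rightarrow> 'l) \<Rightarrow> 'l set"
  for n sL br X where
  zero: "0 \<in> stlH n sL br X"
| gen: "\<lbrakk>i \<in> {1..n}; j \<in> {1..n}; i \<noteq> j\<rbrakk> \<Longrightarrow> stT br X i j a b \<in> stlH n sL br X"
| add: "\<lbrakk>x \<in> stlH n sL br X; y \<in> stlH n sL br X\<rbrakk> \<Longrightarrow> x + y \<in> stlH n sL br X"
| smul: "x \<in> stlH n sL br X \<Longrightarrow> sL k x \<in> stlH n sL br X"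

end

theory Submission
  imports Defs
begin

context
  fixes sR :: "'k::comm_ring_1 \<Rightarrow> 'r::ring_1 \<Rightarrow> 'r"
    and sL :: "'k \<Rightarrow> 'l::ab_group_add \<Rightarrow> 'l"
    and br :: "'l \<Rightarrow> 'l \<Rightarrow> 'l"
    and X :: "nat \<Rightarrow> nat \<Rightarrow> 'r \<Rightarrow> 'l"
    and n :: nat
  assumes n3: "n \<ge> 3"
    and A: "is_K_algebra sR"
    and L: "is_leibniz sL br"
    and R: "stl_rels n sR sL br X"
begin

lemma LL1: "is_K_module sL" using L unfolding is_leibniz_def by (elim conjE) assumption
lemma LL2: "\<forall>x y z. br (x + y) z = br x z + br y z" using L unfolding is_leibniz_def by (elim conjE) assumption
lemma LL3: "\<forall>x y z. br x (y + z) = br x y + br x z" using L unfolding is_leibniz_def by (elim conjE) assumption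
lemma LL4: "\<forall>k x y. br (sL k x) y = sL k (br x y) \<and> br x (sL k y) = sL k (br x y)" using L unfolding is_leibniz_def by (elim conjE) assumption
lemma LL5: "\<forall>x y z. br x (br y z) = br (br x y) z - br (br x z) y" using L unfolding is_leibniz_def by (elim conjE) assumption
lemma br_addL: "br (x + y) z = br x z + br y z"
  using LL2 by (rule allE) (erule allE)+
lemma br_addR: "br z (x + y) = br z x + br z y"
  using LL3 by (rule allE) (erule allE)+
lemma br_0L: "br 0 z = 0"
  using br_addL[of 0 0 z] by simp
lemma br_negL: "br (- x) z = - br x z"
proof -
  have "br x z + br (-x) z = 0" using br_addL[of x "-x" z] by (simp add: br_0L)
  then show ?thesis by (rule minus_unique[symmetric])
qed
lemma br_sL: "br (sL k x) y = sL k (br x y)"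
  using LL4 by (rule allE) (erule allE, erule allE, erule conjE)
lemma leib: "br x (br y z) = br (br x y) z - br (br x z) y"
  using LL5 by (rule allE) (erule allE)+
lemma sL_add: "sL k (x + y) = sL k x + sL k y"
  using LL1 unfolding is_K_module_def by (elim conjE) (erule allE)+
lemma sL_0: "sL k 0 = 0"
  using sL_add[of k 0 0] by simp
lemma sL_neg: "sL k (- x) = - sL k x"
proof -
  have "sL k x + sL k (-x) = 0" using sL_add[of k x "-x"] by (simp add: sL_0)
  then show ?thesis by (rule minus_unique[symmetric])
qed
lemma sL_diff: "sL k (x - y) = sL k x - sL k y"
  using sL_add[of k x "-y"] sL_neg by simp
lemma sR_mult: "sR k (x * y) = x * sR k y"
  using A unfolding is_K_algebra_def by (elim conjE) (erule allE, erule allE, erule allE, erule conjE)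

lemma RR1: "\<forall>i\<in>{1..n}. \<forall>j\<in>{1..n}. i \<noteq> j \<longrightarrow>
        (\<forall>a b. X i j (a + b) = X i j a + X i j b) \<and>
        (\<forall>k a. X i j (sR k a) = sL k (X i j a))"
  using R unfolding stl_rels_def by (elim conjE) assumption
lemma RR2: "\<forall>i\<in>{1..n}. \<forall>j\<in>{1..n}. \<forall>k\<in>{1..n}. i \<noteq> j \<and> j \<noteq> k \<and> i \<noteq> k \<longrightarrow>
        (\<forall>a b. br (X i j a) (X j k b) = X i k (a * b)) \<and>
        (\<forall>a b. br (X i j a) (X k i b) = - X k j (b * a))"
  using R unfolding stl_rels_def by (elim conjE) assumption

lemma X_add: "i \<in> {1..n} \<Longrightarrow> j \<in> {1..n} \<Longrightarrow> i \<noteq> j \<Longrightarrow> X i j (a + b) = X i j a + X i j b"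
  using RR1[rule_format, of i j] by simp
lemma X_sR: "i \<in> {1..n} \<Longrightarrow> j \<in> {1..n} \<Longrightarrow> i \<noteq> j \<Longrightarrow> X i j (sR k a) = sL k (X i j a)"
  using RR1[rule_format, of i j] by simp
lemma X_0: "i \<in> {1..n} \<Longrightarrow> j \<in> {1..n} \<Longrightarrow> i \<noteq> j \<Longrightarrow> X i j 0 = 0"
  using X_add[of i j 0 0] by simp
lemma X_neg: "i \<in> {1..n} \<Longrightarrow> j \<in> {1..n} \<Longrightarrow> i \<noteq> j \<Longrightarrow> X i j (- a) = - X i j a"
proof -
  assume h: "i \<in> {1..n}" "j \<in> {1..n}" "i \<noteq> j"
  have "X i j a + X i j (-a) = 0" using X_add[of i j a "-a"] X_0 h by simp
  then show ?thesis by (rule minus_unique[symmetric])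
qed
lemma rel1: "i \<in> {1..n} \<Longrightarrow> j \<in> {1..n} \<Longrightarrow> k \<in> {1..n} \<Longrightarrow> i \<noteq> j \<Longrightarrow> j \<noteq> k \<Longrightarrow> i \<noteq> k
   \<Longrightarrow> br (X i j a) (X j k b) = X i k (a * b)"
  using RR2[rule_format, of i j k] by simp
lemma rel2: "i \<in> {1..n} \<Longrightarrow> j \<in> {1..n} \<Longrightarrow> k \<in> {1..n} \<Longrightarrow> i \<noteq> j \<Longrightarrow> j \<noteq> k \<Longrightarrow> i \<noteq> k
   \<Longrightarrow> br (X i j a) (X k i b) = - X k j (b * a)"
  using RR2[rule_format, of i j k] by simp

lemma eqA:
  assumes "i\<in>{1..n}" "j\<in>{1..n}" "k\<in>{1..n}" "i\<noteq>j" "j\<noteq>k" "i\<noteq>k"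
  shows "stT br X i j a b = stT br X i k (a*b) 1 + stT br X k j a b"
proof -
  have 1: "X j i b = br (X j k b) (X k i 1)" using rel1[of j k i b 1] assms by auto
  have 2: "br (X i j a) (X j k b) = X i k (a*b)" using rel1 assms by auto
  have 3: "br (X i j a) (X k i 1) = - X k j a" using rel2[of i j k a 1] assms by auto
  have "stT br X i j a b = br (X i j a) (br (X j k b) (X k i 1))" using 1 by (simp add: stT_def)
  also have "\<dots> = br (br (X i j a) (X j k b)) (X k i 1) - br (br (X i j a) (X k i 1)) (X j k b)" by (rule leib)
  finally show ?thesis using 2 3 by (simp add: stT_def br_negL)
qed

lemma eqB:
  assumes "i\<in>{1..n}" "j\<in>{1..n}" "k\<in>{1..n}" "i\<noteq>j" "j\<noteq>k" "i\<noteq>k"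
  shows "stT br X i j a b = stT br X i k a b - stT br X j k (b*a) 1"
proof -
  have 1: "X i j a = br (X i k a) (X k j 1)" using rel1[of i k j a 1] assms by auto
  have 2: "br (X k j 1) (X j i b) = X k i b" using rel1[of k j i 1 b] assms by auto
  have 3: "br (X i k a) (X j i b) = - X j k (b*a)" using rel2[of i k j a b] assms by auto
  have "br (X i k a) (br (X k j 1) (X j i b)) = br (br (X i k a) (X k j 1)) (X j i b) - br (br (X i k a) (X j i b)) (X k j 1)" by (rule leib)
  then have "stT br X i k a b = stT br X i j a b + stT br X j k (b*a) 1"
    using 1 2 3 by (simp add: stT_def br_negL)
  then show ?thesis by (simp add: algebra_simps)
qed

lemma T1j:
  assumes "j \<in> {2..n}"
  shows "stT br X 1 j a b = stt br X a b + stT br X 1 j (b*a) 1"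
proof (cases "j = 2")
  case True then show ?thesis by (simp add: stt_def)
next
  case False
  have a: "stT br X 1 j a b = stT br X 1 2 a b - stT br X j 2 (b*a) 1"
    using eqB[of 1 j 2] assms False n3 by auto
  have b: "stT br X 1 j (b*a) 1 = stT br X 1 2 (b*a) 1 - stT br X j 2 (1*(b*a)) 1"
    using eqB[of 1 j 2] assms False n3 by auto
  show ?thesis by (subst a, subst b) (simp add: stt_def)
qed

lemma Tkj:
  assumes "j \<in> {2..n}" "k \<in> {2..n}" "j \<noteq> k"
  shows "stT br X k j a b = stT br X 1 j a b - stT br X 1 k (a*b) 1"
  using eqA[of 1 j k a b] assms by (auto simp: algebra_simps)

lemma Tj1:
  assumes "j \<in> {2..n}"
  shows "stT br X j 1 a b = stt br X a b - stT br X 1 j (a*b) 1"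
proof -
  define m where "m = (if j = 2 then 3 else (2::nat))"
  have m: "m \<in> {2..n}" "m \<noteq> j" using assms n3 by (auto simp: m_def)
  have a: "stT br X j 1 a b = stT br X j m a b - stT br X 1 m (b*a) 1"
    using eqB[of j 1 m a b] assms m by auto
  have b: "stT br X j m a b = stT br X 1 m a b - stT br X 1 j (a*b) 1"
    using Tkj[of m j a b] assms m by auto
  have c: "stT br X 1 m a b = stt br X a b + stT br X 1 m (b*a) 1"
    using T1j[OF m(1), of a b] by simp
  show ?thesis unfolding a b c by (simp add: algebra_simps)
qed

definition inS :: "'l \<Rightarrow> bool" where
  "inS x \<longleftrightarrow> (\<exists>ps :: ('r \<times> 'r) list. \<exists>c :: nat \<Rightarrow> 'r.
           x = (\<Sum>(a, b)\<leftarrow>ps. stt br X a b) + (\<Sum>j = 2..n. stT br X 1 j (c j) 1))"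

lemma T_0: "i \<in> {1..n} \<Longrightarrow> l \<in> {1..n} \<Longrightarrow> i \<noteq> l \<Longrightarrow> stT br X i l 0 v = 0"
  by (simp add: stT_def X_0 br_0L)
lemma T_add: "i \<in> {1..n} \<Longrightarrow> l \<in> {1..n} \<Longrightarrow> i \<noteq> l \<Longrightarrow> stT br X i l (u + w) v = stT br X i l u v + stT br X i l w v"
  by (simp add: stT_def X_add br_addL)
lemma T_neg: "i \<in> {1..n} \<Longrightarrow> l \<in> {1..n} \<Longrightarrow> i \<noteq> l \<Longrightarrow> stT br X i l (- u) v = - stT br X i l u v"
  by (simp add: stT_def X_neg br_negL)
lemma T_sL: "i \<in> {1..n} \<Longrightarrow> l \<in> {1..n} \<Longrightarrow> i \<noteq> l \<Longrightarrow> sL k (stT br X i l u v) = stT br X i l (sR k u) v"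
  by (simp add: stT_def X_sR br_sL)
lemma t_neg: "stt br X (- a) b = - stt br X a b"
  using T_neg n3 unfolding stt_def stT_def
  by (simp add: X_neg br_negL)
lemma t_sL: "sL k (stt br X a b) = stt br X (sR k a) b"
  using n3 unfolding stt_def stT_def
  by (simp add: X_sR br_sL sL_diff sR_mult[symmetric])

lemma inS_0: "inS 0"
  unfolding inS_def by (rule exI[of _ "[]"], rule exI[of _ "\<lambda>_. 0"]) (simp add: T_0 n3)

lemma inS_stt: "inS (stt br X a b)"
  unfolding inS_def by (rule exI[of _ "[(a,b)]"], rule exI[of _ "\<lambda>_. 0"]) (simp add: T_0 n3)

lemma inS_T: assumes "j \<in> {2..n}" shows "inS (stT br X 1 j u 1)"
  unfolding inS_def
proof (rule exI[of _ "[]"], rule exI[of _ "\<lambda>l. if l = j then u else 0"])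
  have "(\<Sum>l = 2..n. stT br X 1 l (if l = j then u else 0) 1) = (\<Sum>l = 2..n. if l = j then stT br X 1 j u 1 else 0)"
    by (rule sum.cong) (auto simp: T_0 n3)
  also have "\<dots> = stT br X 1 j u 1" using assms by simp
  finally show "stT br X 1 j u 1 = (\<Sum>(a, b)\<leftarrow>[]. stt br X a b) + (\<Sum>l = 2..n. stT br X 1 l (if l = j then u else 0) 1)"
    by simp
qed

lemma inS_I: "x = (\<Sum>(a, b)\<leftarrow>ps. stt br X a b) + (\<Sum>j = 2..n. stT br X 1 j (c j) 1) \<Longrightarrow> inS x"
  unfolding inS_def by (rule exI[of _ ps], rule exI[of _ c])

lemma inS_E: "inS x \<Longrightarrow> (\<And>ps c. x = (\<Sum>(a, b)\<leftarrow>ps. stt br X a b) + (\<Sum>j = 2..n. stT br X 1 j (c j) 1) \<Longrightarrow> P) \<Longrightarrow> P"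
  unfolding inS_def by blast

lemma Tsum_add: "(\<Sum>j = 2..n. stT br X 1 j (c j + d j) 1) = (\<Sum>j = 2..n. stT br X 1 j (c j) 1) + (\<Sum>j = 2..n. stT br X 1 j (d j) 1)"
proof -
  have "(\<Sum>j = 2..n. stT br X 1 j (c j + d j) 1) = (\<Sum>j = 2..n. stT br X 1 j (c j) 1 + stT br X 1 j (d j) 1)"
    by (rule sum.cong) (auto simp: T_add n3)
  then show ?thesis by (simp only: sum.distrib)
qed

lemma Tsum_neg: "(\<Sum>j = 2..n. stT br X 1 j (- c j) 1) = - (\<Sum>j = 2..n. stT br X 1 j (c j) 1)"
proof -
  have "(\<Sum>j = 2..n. stT br X 1 j (- c j) 1) = (\<Sum>j = 2..n. - stT br X 1 j (c j) 1)"
    by (rule sum.cong) (auto simp: T_neg n3)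
  then show ?thesis by (simp only: sum_negf)
qed

lemma Tsum_sL: "sL k (\<Sum>j = 2..n. stT br X 1 j (c j) 1) = (\<Sum>j = 2..n. stT br X 1 j (sR k (c j)) 1)"
proof -
  have "sL k (\<Sum>j = 2..n. stT br X 1 j (c j) 1) = (\<Sum>j = 2..n. sL k (stT br X 1 j (c j) 1))"
    using sum_comp_morphism[of "sL k" "\<lambda>j. stT br X 1 j (c j) 1" "{2..n}"] sL_0 sL_add by (simp add: o_def)
  also have "\<dots> = (\<Sum>j = 2..n. stT br X 1 j (sR k (c j)) 1)"
    by (rule sum.cong) (auto simp: T_sL n3)
  finally show ?thesis .
qed

lemma inS_add: assumes "inS x" "inS y" shows "inS (x + y)"
proof -
  obtain ps c where x: "x = (\<Sum>(a, b)\<leftarrow>ps. stt br X a b) + (\<Sum>j = 2..n. stT br X 1 j (c j) 1)"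
    using assms(1) by (rule inS_E)
  obtain qs d where y: "y = (\<Sum>(a, b)\<leftarrow>qs. stt br X a b) + (\<Sum>j = 2..n. stT br X 1 j (d j) 1)"
    using assms(2) by (rule inS_E)
  have "x + y = (\<Sum>(a, b)\<leftarrow>ps @ qs. stt br X a b) + (\<Sum>j = 2..n. stT br X 1 j (c j + d j) 1)"
    unfolding x y Tsum_add by (simp add: algebra_simps)
  then show ?thesis by (rule inS_I)
qed

lemma sum_list_neg: "(\<Sum>(a, b)\<leftarrow>map (\<lambda>(a,b). (-a, b)) ps. stt br X a b) = - (\<Sum>(a, b)\<leftarrow>ps. stt br X a b)"
  by (induction ps) (auto simp: t_neg)

lemma sum_list_sL: "(\<Sum>(a, b)\<leftarrow>map (\<lambda>(a,b). (sR k a, b)) ps. stt br X a b) = sL k (\<Sum>(a, b)\<leftarrow>ps. stt br X a b)"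
  by (induction ps) (auto simp: t_sL sL_0 sL_add)

lemma inS_neg: assumes "inS x" shows "inS (- x)"
proof -
  obtain ps c where x: "x = (\<Sum>(a, b)\<leftarrow>ps. stt br X a b) + (\<Sum>j = 2..n. stT br X 1 j (c j) 1)"
    using assms(1) by (rule inS_E)
  have "- x = (\<Sum>(a, b)\<leftarrow>map (\<lambda>(a,b). (-a, b)) ps. stt br X a b) + (\<Sum>j = 2..n. stT br X 1 j (- c j) 1)"
    unfolding x sum_list_neg Tsum_neg by simp
  then show ?thesis by (rule inS_I)
qed

lemma inS_sL: assumes "inS x" shows "inS (sL k x)"
proof -
  obtain ps c where x: "x = (\<Sum>(a, b)\<leftarrow>ps. stt br X a b) + (\<Sum>j = 2..n. stT br X 1 j (c j) 1)"
    using assms(1) by (rule inS_E)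
  have "sL k x = (\<Sum>(a, b)\<leftarrow>map (\<lambda>(a,b). (sR k a, b)) ps. stt br X a b) + (\<Sum>j = 2..n. stT br X 1 j (sR k (c j)) 1)"
    unfolding x sum_list_sL Tsum_sL sL_add ..
  then show ?thesis by (rule inS_I)
qed

lemma inS_diff: "inS x \<Longrightarrow> inS y \<Longrightarrow> inS (x - y)"
  using inS_add[of x "- y"] inS_neg[of y] by simp

lemma inS_gen:
  assumes "i \<in> {1..n}" "j \<in> {1..n}" "i \<noteq> j"
  shows "inS (stT br X i j a b)"
proof -
  consider "i = 1" "j \<in> {2..n}" | "j = 1" "i \<in> {2..n}" | "i \<in> {2..n}" "j \<in> {2..n}"
    using assms by fastforce
  then show ?thesis
  proof cases
    case 1 show ?thesis unfolding 1(1) T1j[OF 1(2), of a b]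
      by (rule inS_add[OF inS_stt inS_T[OF 1(2)]])
  next
    case 2 show ?thesis unfolding 2(1) Tj1[OF 2(2), of a b]
      by (rule inS_diff[OF inS_stt inS_T[OF 2(2)]])
  next
    case 3 show ?thesis unfolding Tkj[OF 3(2,1) assms(3)[symmetric], of a b] T1j[OF 3(2), of a b]
      by (rule inS_diff[OF inS_add[OF inS_stt inS_T[OF 3(2)]] inS_T[OF 3(1)]])
  qed
qed

lemma inS_H: "x \<in> stlH n sL br X \<Longrightarrow> inS x"
proof (induction rule: stlH.induct)
  case zero then show ?case by (rule inS_0)
next
  case (gen i j a b) then show ?case by (rule inS_gen)
next
  case (add x y) from add.IH show ?case by (rule inS_add)
next
  case (smul x k) from smul.IH show ?case by (rule inS_sL)
qed

end

theorem lemma2p7: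
  fixes sR :: "'k::comm_ring_1 \<Rightarrow> 'r::ring_1 \<Rightarrow> 'r"
    and sL :: "'k \<Rightarrow> 'l::ab_group_add \<Rightarrow> 'l"
    and br :: "'l \<Rightarrow> 'l \<Rightarrow> 'l"
    and X :: "nat \<Rightarrow> nat \<Rightarrow> 'r \<Rightarrow> 'l"
    and n :: nat and x :: 'l
  assumes "n \<ge> 3"
    and "is_K_algebra sR"
    and "\<exists>B. 1 \<in> B \<and> is_K_basis sR B"
    and "is_leibniz sL br"
    and "stl_rels n sR sL br X"
    and "x \<in> stlH n sL br X"
  shows "\<exists>ps :: ('r \<times> 'r) list. \<exists>c :: nat \<Rightarrow> 'r.
           x = (\<Sum>(a, b)\<leftarrow>ps. stt br X a b) + (\<Sum>j = 2..n. stT br X 1 j (c j) 1)"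
  using inS_H[OF assms(1,2,4,5,6)] unfolding inS_def[OF assms(1,2,4,5)] .

end
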